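(* For every $n\ge1$ there is a bijection $\varrho:\mathcal{I}_n\to\mathcal{I}_n$ such that for all $s\in\mathcal{I}_n$, $$(\mathsf{asc},\mathsf{rep},\mathsf{zero},\mathsf{max})(s)=(\mathsf{rep},\mathsf{asc},\mathsf{rmin},\mathsf{zero})(\varrho(s)).$$
   Context: $\mathcal{I}_n$ is the set of inversion sequences $(s_1,\dots,s_n)$ of integers with $0\le s_i<i$ for all $i$. $\mathsf{asc}(s)=|\{i\in[n-1]:s_i<s_{i+1}\}|$; $\mathsf{rep}(s)=n-|\{s_1,\dots,s_n\}|$; $\mathsf{zero}(s)=|\{i:s_i=0\}|$; $\mathsf{max}(s)=|\{i:s_i=i-1\}|$; $\mathsf{rmin}(s)=|\{s_i: s_i<s_j \text{ for all } j>i\}|$ (number of right-to-left minima). *)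

theory Defs
  imports Main
begin

text \<open>Inversion sequences of length n, represented 0-indexed as lists:
  the paper's s_i (1 <= i <= n) is s ! (i - 1), and 0 <= s_i < i becomes s ! k <= k.\<close>

definition inv_seqs :: "nat \<Rightarrow> nat list set" where
  "inv_seqs n = {s. length s = n \<and> (\<forall>k<n. s ! k \<le> k)}"

definition asc :: "nat list \<Rightarrow> nat" where
  "asc s = card {k. Suc k < length s \<and> s ! k < s ! Suc k}"

definition rep :: "nat list \<Rightarrow> nat" where
  "rep s = length s - card (set s)"

definition zero :: "nat list \<Rightarrow> nat" where
  "zero s = card {k. k < length s \<and> s ! k = 0}"

definition maxst :: "nat list \<Rightarrow> nat" where
  "maxst s = card {k. k < length s \<and> s ! k = k}"

definition rmin :: "nat list \<Rightarrow> nat" where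
  "rmin s = card {s ! k | k. k < length s \<and> (\<forall>j. k < j \<and> j < length s \<longrightarrow> s ! k < s ! j)}"

end

theory Submission
  imports Defs "HOL-Combinatorics.Multiset_Permutations"
begin


lemma inv_seqs_Suc: "inv_seqs (Suc n) = (\<lambda>(s,x). s @ [x]) ` (inv_seqs n \<times> {0..n})"
proof (intro equalityI subsetI)
  fix t assume t: "t \<in> inv_seqs (Suc n)"
  then have len: "length t = Suc n" and b: "\<forall>k<Suc n. t ! k \<le> k" by (auto simp: inv_seqs_def)
  obtain s x where tx: "t = s @ [x]" using len by (cases t rule: rev_cases) auto
  have ls: "length s = n" using len tx by simp
  have "\<forall>k<n. s ! k \<le> k"
  proof (intro allI impI)
    fix k assume "k < n"
    then have "t ! k = s ! k" using tx ls by (simp add: nth_append)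
    then show "s ! k \<le> k" using b \<open>k < n\<close> by (metis less_SucI)
  qed
  then have "s \<in> inv_seqs n" using ls by (simp add: inv_seqs_def)
  moreover have "x \<le> n" using b tx ls by (metis lessI nth_append_length)
  ultimately show "t \<in> (\<lambda>(s,x). s @ [x]) ` (inv_seqs n \<times> {0..n})" using tx by force
next
  fix t assume "t \<in> (\<lambda>(s,x). s @ [x]) ` (inv_seqs n \<times> {0..n})"
  then obtain s x where "s \<in> inv_seqs n" "x \<le> n" "t = s @ [x]" by auto
  then show "t \<in> inv_seqs (Suc n)" by (auto simp: inv_seqs_def nth_append less_Suc_eq)
qed

lemma inv_seqs_snoc_iff: "s @ [x] \<in> inv_seqs (Suc n) \<longleftrightarrow> s \<in> inv_seqs n \<and> x \<le> n"
proof
  assume "s @ [x] \<in> inv_seqs (Suc n)"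
  then obtain s' x' where "s' \<in> inv_seqs n" "x' \<le> n" "s @ [x] = s' @ [x']"
    unfolding inv_seqs_Suc by auto
  then show "s \<in> inv_seqs n \<and> x \<le> n" by auto
next
  assume "s \<in> inv_seqs n \<and> x \<le> n"
  then show "s @ [x] \<in> inv_seqs (Suc n)" unfolding inv_seqs_Suc by force
qed

lemma inv_seqs_length: "s \<in> inv_seqs n \<Longrightarrow> length s = n"
  by (simp add: inv_seqs_def)

lemma finite_inv_seqs: "finite (inv_seqs n)"
proof -
  have "inv_seqs n \<subseteq> {s. set s \<subseteq> {..n} \<and> length s = n}"
    by (auto simp: inv_seqs_def in_set_conv_nth) (meson le_trans less_imp_le_nat)
  moreover have "finite {s. set s \<subseteq> {..n} \<and> length s = n}"
    by (rule finite_lists_length_eq) simp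
  ultimately show ?thesis by (rule finite_subset)
qed

lemma card_inv_seqs: "card (inv_seqs n) = fact n"
proof (induction n)
  case 0
  have "inv_seqs 0 = {[]}" by (auto simp: inv_seqs_def)
  then show ?case by simp
next
  case (Suc n)
  have inj: "inj_on (\<lambda>(s,x). s @ [x]) (inv_seqs n \<times> {0..n})"
    by (auto simp: inj_on_def)
  have "card (inv_seqs (Suc n)) = card (inv_seqs n \<times> {0..n})"
    unfolding inv_seqs_Suc by (rule card_image[OF inj])
  also have "\<dots> = fact n * Suc n" using Suc by (simp add: card_cartesian_product)
  finally show ?case by (simp add: algebra_simps)
qed

definition Cont :: "nat \<Rightarrow> nat \<Rightarrow> nat list set" where
  "Cont m k = {c. length c = k \<and> (\<forall>i<k. c ! i \<le> m + i)}"

lemma finite_Cont: "finite (Cont m k)"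
proof -
  have "Cont m k \<subseteq> {s. set s \<subseteq> {..m+k} \<and> length s = k}"
    by (auto simp: Cont_def in_set_conv_nth) (meson add_le_mono le_refl le_trans less_imp_le_nat)
  moreover have "finite {s. set s \<subseteq> {..m+k} \<and> length s = k}"
    by (rule finite_lists_length_eq) simp
  ultimately show ?thesis by (rule finite_subset)
qed

lemma card_split:
  assumes "m \<le> n"
  shows "card {s \<in> inv_seqs n. Q s} = (\<Sum>u\<in>inv_seqs m. card {c \<in> Cont m (n - m). Q (u @ c)})"
proof -
  let ?S = "Sigma (inv_seqs m) (\<lambda>u. {c \<in> Cont m (n - m). Q (u @ c)})"
  have bij: "bij_betw (\<lambda>(u,c). u @ c) ?S {s \<in> inv_seqs n. Q s}"
  proof (rule bij_betwI[where g = "\<lambda>s. (take m s, drop m s)"])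
    show "(\<lambda>(u,c). u @ c) \<in> ?S \<rightarrow> {s \<in> inv_seqs n. Q s}"
    proof
      fix z assume "z \<in> ?S"
      then obtain u c where z: "z = (u,c)" "u \<in> inv_seqs m" "c \<in> Cont m (n - m)" "Q (u @ c)" by auto
      have "u @ c \<in> inv_seqs n"
        using z assms unfolding inv_seqs_def Cont_def
        by (auto simp: nth_append) (metis add_diff_inverse_nat diff_less_mono le_add_diff_inverse2 not_less)
      then show "(\<lambda>(u,c). u @ c) z \<in> {s \<in> inv_seqs n. Q s}" using z by auto
    qed
    show "(\<lambda>s. (take m s, drop m s)) \<in> {s \<in> inv_seqs n. Q s} \<rightarrow> ?S"
    proof
      fix s assume s: "s \<in> {s \<in> inv_seqs n. Q s}"
      then have ls: "length s = n" and b: "\<forall>k<n. s ! k \<le> k" and q: "Q s" by (auto simp: inv_seqs_def)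
      have "take m s \<in> inv_seqs m" using ls b assms by (auto simp: inv_seqs_def)
      moreover have "drop m s \<in> Cont m (n - m)" using ls b assms by (auto simp: Cont_def)
      ultimately show "(\<lambda>s. (take m s, drop m s)) s \<in> ?S" using q by simp
    qed
    show "\<And>z. z \<in> ?S \<Longrightarrow> (\<lambda>s. (take m s, drop m s)) ((\<lambda>(u,c). u @ c) z) = z"
      by (auto simp: inv_seqs_def)
    show "\<And>s. s \<in> {s \<in> inv_seqs n. Q s} \<Longrightarrow> (\<lambda>(u,c). u @ c) ((\<lambda>s. (take m s, drop m s)) s) = s"
      by simp
  qed
  have "card {s \<in> inv_seqs n. Q s} = card ?S" using bij_betw_same_card[OF bij] by simp
  also have "\<dots> = (\<Sum>u\<in>inv_seqs m. card {c \<in> Cont m (n - m). Q (u @ c)})"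
    by (rule card_SigmaI) (auto simp: finite_inv_seqs intro: finite_subset[OF _ finite_Cont])
  finally show ?thesis .
qed



section \<open>Hybrid statistics\<close>

definition updP :: "nat set \<Rightarrow> nat \<Rightarrow> nat set" where
  "updP Y x = {y \<in> Y. y < x} \<union> {x} \<union> Suc ` {y \<in> Y. x < y}"

primrec Wr :: "nat \<Rightarrow> nat list \<Rightarrow> nat set" where
  "Wr j [] = {}"
| "Wr j (x # r) = (if length r < j then updP (Wr j r) x else insert x (Wr j r))"

primrec hr :: "nat \<Rightarrow> nat list \<Rightarrow> nat" where
  "hr j [] = 0"
| "hr j (x # r) = hr j r + (if x \<in> Wr j r then 1 else 0)"

definition Wj :: "nat \<Rightarrow> nat list \<Rightarrow> nat set" where "Wj j s = Wr j (rev s)"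
definition hyb :: "nat \<Rightarrow> nat list \<Rightarrow> nat" where "hyb j s = hr j (rev s)"

lemma Wj_Nil[simp]: "Wj j [] = {}" by (simp add: Wj_def)
lemma Wj_snoc: "Wj j (s @ [x]) = (if length s < j then updP (Wj j s) x else insert x (Wj j s))"
  by (simp add: Wj_def)
lemma hyb_Nil[simp]: "hyb j [] = 0" by (simp add: hyb_def)
lemma hyb_snoc: "hyb j (s @ [x]) = hyb j s + (if x \<in> Wj j s then 1 else 0)"
  by (simp add: hyb_def Wj_def)

lemma Wj_hyb_indep: "length s \<le> j \<Longrightarrow> length s \<le> j' \<Longrightarrow> Wj j s = Wj j' s \<and> hyb j s = hyb j' s"
  by (induction s rule: rev_induct) (auto simp: Wj_snoc hyb_snoc)

lemma Wj_0: "Wj 0 s = set s"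
  by (induction s rule: rev_induct) (auto simp: Wj_snoc)

lemma card_set_le_length: "card (set s) \<le> length s"
  by (rule card_length)

lemma hyb_0: "hyb 0 s = rep s"
proof (induction s rule: rev_induct)
  case Nil then show ?case by (simp add: rep_def)
next
  case (snoc x s)
  have le: "card (set s) \<le> length s" by (rule card_length)
  show ?case
  proof (cases "x \<in> set s")
    case True
    then show ?thesis using snoc le by (simp add: hyb_snoc Wj_0 rep_def insert_absorb)
  next
    case False
    then show ?thesis using snoc le by (simp add: hyb_snoc Wj_0 rep_def)
  qed
qed

definition repf :: "nat set \<Rightarrow> nat list \<Rightarrow> nat" where
  "repf W c = length c - card (set c - W)"

lemma card_set_diff_le: "card (set c - W) \<le> length c"
  by (meson card_length card_mono Diff_subset finite_set le_trans)

lemma repf_snoc: "repf W (c @ [y]) = repf W c + (if y \<in> W \<union> set c then 1 else 0)"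
proof -
  have le: "card (set c - W) \<le> length c" by (rule card_set_diff_le)
  show ?thesis
  proof (cases "y \<in> W \<union> set c")
    case True
    then have "set (c @ [y]) - W = set c - W" by auto
    then show ?thesis using True le by (simp add: repf_def)
  next
    case False
    then have "set (c @ [y]) - W = insert y (set c - W)" by auto
    then show ?thesis using False le by (simp add: repf_def)
  qed
qed

lemma Wj_append: "j \<le> length u \<Longrightarrow> Wj j (u @ c) = Wj j u \<union> set c"
  by (induction c rule: rev_induct) (auto simp: Wj_snoc simp flip: append_assoc)

lemma hyb_append: "j \<le> length u \<Longrightarrow> hyb j (u @ c) = hyb j u + repf (Wj j u) c"
proof (induction c rule: rev_induct)
  case Nil then show ?case by (simp add: repf_def)
next
  case (snoc y c)
  have "hyb j (u @ c @ [y]) = hyb j (u @ c) + (if y \<in> Wj j (u @ c) then 1 else 0)"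
    using hyb_snoc[of j "u @ c" y] by simp
  also have "\<dots> = hyb j u + repf (Wj j u) (c @ [y])"
    using snoc Wj_append[OF snoc.prems, of c] by (simp add: repf_snoc)
  finally show ?case by simp
qed

lemma Wj_sub: "(\<forall>i<length v. v ! i \<le> i) \<Longrightarrow> Wj j v \<subseteq> {..<length v}"
proof (induction v rule: rev_induct)
  case Nil then show ?case by simp
next
  case (snoc x v)
  have "\<forall>i<length v. v ! i \<le> i" using snoc.prems by (metis length_append_singleton less_SucI nth_append)
  then have IH: "Wj j v \<subseteq> {..<length v}" using snoc.IH by simp
  have x: "x \<le> length v" using snoc.prems by (metis length_append_singleton lessI nth_append_length)
  show ?case using IH x by (auto simp: Wj_snoc updP_def)
qed



section \<open>The swap lemma\<close>

definition RL :: "nat list \<Rightarrow> nat \<Rightarrow> bool" where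
  "RL s k = (\<forall>j. k < j \<and> j < length s \<longrightarrow> s ! k < s ! j)"

lemma rmin_card: "rmin s = card {k. k < length s \<and> RL s k}"
proof -
  have eq: "{s ! k | k. k < length s \<and> (\<forall>j. k < j \<and> j < length s \<longrightarrow> s ! k < s ! j)}
      = (\<lambda>k. s ! k) ` {k. k < length s \<and> RL s k}" by (auto simp: RL_def)
  have inj: "inj_on (\<lambda>k. s ! k) {k. k < length s \<and> RL s k}"
  proof (rule inj_onI)
    fix a b assume a: "a \<in> {k. k < length s \<and> RL s k}" and b: "b \<in> {k. k < length s \<and> RL s k}"
      and e: "s ! a = s ! b"
    show "a = b"
    proof (rule ccontr)
      assume "a \<noteq> b"
      then have "a < b \<or> b < a" by arith
      then show False using a b e by (auto simp: RL_def)
    qed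
  qed
  show ?thesis unfolding rmin_def eq using card_image[OF inj] by simp
qed

definition sw :: "nat \<Rightarrow> nat \<Rightarrow> nat" where
  "sw p y = (if y = p then Suc p else if y = Suc p then p else y)"

lemma sw_sw[simp]: "sw p (sw p y) = y" by (simp add: sw_def)
lemma inj_sw: "inj (sw p)" by (metis injI sw_sw)

definition phi :: "nat \<Rightarrow> nat list \<Rightarrow> nat list" where
  "phi p c = (if (p \<in> set c) = (Suc p \<in> set c) then c else map (sw p) c)"

lemma set_map_sw_mem: "(y \<in> set (map (sw p) c)) = (sw p y \<in> set c)"
  by (auto simp: image_iff) (metis sw_sw)

lemma phi_phi: "phi p (phi p c) = c"
proof (cases "(p \<in> set c) = (Suc p \<in> set c)")
  case True then show ?thesis by (simp add: phi_def)
next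
  case False
  have "(p \<in> set (map (sw p) c)) = (Suc p \<in> set c)" "(Suc p \<in> set (map (sw p) c)) = (p \<in> set c)"
    by (simp_all only: set_map_sw_mem) (simp_all add: sw_def)
  then have "phi p (map (sw p) c) = map (sw p) (map (sw p) c)" using False by (simp add: phi_def)
  then show ?thesis using False by (simp add: phi_def map_idI)
qed

lemma set_phi_diff: "set (phi p c) - sw p ` W = sw p ` (set c - W)"
proof (cases "(p \<in> set c) = (Suc p \<in> set c)")
  case True
  have "sw p ` set c = set c"
  proof (intro equalityI subsetI)
    fix y assume "y \<in> sw p ` set c"
    then obtain z where "z \<in> set c" "y = sw p z" by auto
    then show "y \<in> set c" using True by (auto simp: sw_def split: if_splits)
  next
    fix y assume "y \<in> set c"
    then have "sw p y \<in> set c" using True by (auto simp: sw_def)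
    then show "y \<in> sw p ` set c" by (metis image_eqI sw_sw)
  qed
  then show ?thesis using True by (simp add: phi_def image_set_diff[OF inj_sw])
next
  case False
  then show ?thesis by (simp add: phi_def image_set_diff[OF inj_sw])
qed

lemma repf_phi: "repf (sw p ` W) (phi p c) = repf W c"
proof -
  have "card (set (phi p c) - sw p ` W) = card (set c - W)"
    unfolding set_phi_diff by (rule card_image) (meson inj_sw inj_on_subset subset_UNIV)
  moreover have "length (phi p c) = length c" by (simp add: phi_def)
  ultimately show ?thesis by (simp add: repf_def)
qed

lemma phi_Cont: assumes "c \<in> Cont m k" "Suc p < m" shows "phi p c \<in> Cont m k"
proof -
  have "\<forall>i<k. sw p (c ! i) \<le> m + i" using assms by (auto simp: Cont_def sw_def)
  then show ?thesis using assms by (auto simp: Cont_def phi_def)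
qed

definition oth :: "nat list \<Rightarrow> nat \<times> nat \<times> nat \<times> nat" where
  "oth s = (asc s, zero s, maxst s, rmin s)"

lemma oth_phi:
  assumes u: "u \<in> inv_seqs m" "u \<noteq> []" "last u < p" "Suc p < m" and c: "c \<in> Cont m k"
  shows "oth (u @ phi p c) = oth (u @ c)"
proof (cases "(p \<in> set c) = (Suc p \<in> set c)")
  case True then show ?thesis by (simp add: phi_def)
next
  case False
  let ?t = "u @ c" and ?t' = "u @ map (sw p) c"
  have lu: "length u = m" using u by (simp add: inv_seqs_def)
  have lc: "length c = k" using c by (simp add: Cont_def)
  have len: "length ?t' = length ?t" by simp
  have m1: "m \<ge> 1" using u lu by (cases u) auto
  have lastu: "?t ! (m - 1) = last u" using u lu by (simp add: nth_append last_conv_nth)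
  have nth_lo: "\<And>i. i < m \<Longrightarrow> ?t' ! i = ?t ! i" using lu by (simp add: nth_append)
  have nth_hi: "\<And>i. m \<le> i \<Longrightarrow> i < m + k \<Longrightarrow> ?t' ! i = sw p (?t ! i)" using lu lc by (simp add: nth_append)
  have hi_in: "\<And>i. m \<le> i \<Longrightarrow> i < m + k \<Longrightarrow> ?t ! i \<in> set c" using lu lc by (simp add: nth_append)
  have notboth: "\<not> (p \<in> set c \<and> Suc p \<in> set c)" using False by auto
  have mono: "\<And>a b. a \<in> set c \<Longrightarrow> b \<in> set c \<Longrightarrow> (a < b) = (sw p a < sw p b)"
    using notboth by (auto simp: sw_def)
  have p1: "p \<ge> 1" using u by simp
  have lowcmp: "\<And>y a. y < p \<Longrightarrow> (y < a) = (y < sw p a)" by (auto simp: sw_def)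
  have tlen: "length ?t = m + k" using lu lc by simp
  have A: "{i. Suc i < length ?t' \<and> ?t' ! i < ?t' ! Suc i} = {i. Suc i < length ?t \<and> ?t ! i < ?t ! Suc i}"
  proof -
    have "?t' ! i < ?t' ! Suc i \<longleftrightarrow> ?t ! i < ?t ! Suc i" if "Suc i < m + k" for i
    proof -
      consider "Suc i < m" | "Suc i = m" | "m \<le> i" by arith
      then show ?thesis
      proof cases
        case 1 then show ?thesis using nth_lo by simp
      next
        case 2
        then have "?t ! i = last u" using lastu by (metis diff_Suc_1)
        moreover have "?t' ! i = ?t ! i" using nth_lo 2 by simp
        moreover have "?t' ! Suc i = sw p (?t ! Suc i)" using nth_hi 2 that by simp
        ultimately show ?thesis using lowcmp[OF u(3), of "?t ! Suc i"] by simp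
      next
        case 3
        have "?t' ! i = sw p (?t ! i)" "?t' ! Suc i = sw p (?t ! Suc i)"
          using nth_hi 3 that by auto
        moreover have "?t ! i \<in> set c" "?t ! Suc i \<in> set c" using hi_in 3 that by auto
        ultimately show ?thesis using mono[of "?t ! i" "?t ! Suc i"] by simp
      qed
    qed
    then show ?thesis using tlen by auto
  qed
  have Z: "{k. k < length ?t' \<and> ?t' ! k = 0} = {k. k < length ?t \<and> ?t ! k = 0}"
  proof -
    have "?t' ! i = 0 \<longleftrightarrow> ?t ! i = 0" if "i < m + k" for i
    proof (cases "i < m")
      case True then show ?thesis using nth_lo by simp
    next
      case False then show ?thesis using nth_hi that p1 by (auto simp: sw_def)
    qed
    then show ?thesis using tlen by auto
  qed
  have M: "{k. k < length ?t' \<and> ?t' ! k = k} = {k. k < length ?t \<and> ?t ! k = k}"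
  proof -
    have "?t' ! i = i \<longleftrightarrow> ?t ! i = i" if "i < m + k" for i
    proof (cases "i < m")
      case True then show ?thesis using nth_lo by simp
    next
      case False then show ?thesis using nth_hi that u(4) by (auto simp: sw_def)
    qed
    then show ?thesis using tlen by auto
  qed
  have R: "{k. k < length ?t' \<and> RL ?t' k} = {k. k < length ?t \<and> RL ?t k}"
  proof -
    have "RL ?t' i \<longleftrightarrow> RL ?t i" if i: "i < m + k" for i
    proof (cases "m \<le> i")
      case True
      have "?t' ! i < ?t' ! j \<longleftrightarrow> ?t ! i < ?t ! j" if "i < j" "j < m + k" for j
      proof -
        have "?t' ! i = sw p (?t ! i)" "?t' ! j = sw p (?t ! j)"
          using nth_hi True i that by auto
        moreover have "?t ! i \<in> set c" "?t ! j \<in> set c" using hi_in True i that by auto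
        ultimately show ?thesis using mono[of "?t ! i" "?t ! j"] by simp
      qed
      then show ?thesis unfolding RL_def using tlen by auto
    next
      case False
      then have ilo: "i < m" by simp
      show ?thesis
      proof (cases "?t ! i < p")
        case True
        have "?t' ! i < ?t' ! j \<longleftrightarrow> ?t ! i < ?t ! j" if "i < j" "j < m + k" for j
        proof (cases "j < m")
          case True then show ?thesis using nth_lo ilo by simp
        next
          case False
          have "?t' ! j = sw p (?t ! j)" using nth_hi False that by auto
          moreover have "?t' ! i = ?t ! i" using nth_lo ilo by simp
          ultimately show ?thesis using lowcmp[OF \<open>?t ! i < p\<close>, of "?t ! j"] by simp
        qed
        then show ?thesis unfolding RL_def using tlen by auto
      next
        case False
        then have "i \<noteq> m - 1" using lastu u(3) by auto
        then have "i < m - 1" using ilo by arith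
        then have "\<not> RL ?t i" and "\<not> RL ?t' i" unfolding RL_def
          using lastu nth_lo[of i] nth_lo[of "m - 1"] False u(3) tlen m1 by (auto intro!: exI[of _ "m - 1"])
        then show ?thesis by simp
      qed
    qed
    then show ?thesis using tlen by auto
  qed
  show ?thesis using A Z M R False
    by (simp add: oth_def asc_def zero_def maxst_def rmin_card phi_def del: nth_append)
qed

lemma swap_count:
  assumes u: "u \<in> inv_seqs m" "u \<noteq> []" "last u < p" "Suc p < m"
  shows "card {c \<in> Cont m k. Q (repf W c) (oth (u @ c))}
       = card {c \<in> Cont m k. Q (repf (sw p ` W) c) (oth (u @ c))}"
proof -
  have "bij_betw (phi p) {c \<in> Cont m k. Q (repf W c) (oth (u @ c))}
                         {c \<in> Cont m k. Q (repf (sw p ` W) c) (oth (u @ c))}"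
  proof (rule bij_betwI[where g = "phi p"])
    show "phi p \<in> {c \<in> Cont m k. Q (repf W c) (oth (u @ c))} \<rightarrow> {c \<in> Cont m k. Q (repf (sw p ` W) c) (oth (u @ c))}"
      using phi_Cont[OF _ u(4)] oth_phi[OF u] repf_phi by auto
    show "phi p \<in> {c \<in> Cont m k. Q (repf (sw p ` W) c) (oth (u @ c))} \<rightarrow> {c \<in> Cont m k. Q (repf W c) (oth (u @ c))}"
    proof
      fix c assume c: "c \<in> {c \<in> Cont m k. Q (repf (sw p ` W) c) (oth (u @ c))}"
      have "repf W (phi p c) = repf (sw p ` W) c"
        using repf_phi[of p "sw p ` W" c] by (simp add: image_image)
      then show "phi p c \<in> {c \<in> Cont m k. Q (repf W c) (oth (u @ c))}"
        using c phi_Cont[OF _ u(4)] oth_phi[OF u] by auto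
    qed
  qed (auto simp: phi_phi)
  then show ?thesis by (rule bij_betw_same_card)
qed



section \<open>Rotation and the hybrid argument\<close>

lemma rotation:
  assumes u: "u \<in> inv_seqs m" "u \<noteq> []" and fin: "finite S"
  shows "S \<subseteq> {last u<..<m - 1} \<Longrightarrow> B \<inter> (S \<union> Suc ` S) = {} \<Longrightarrow>
    card {c \<in> Cont m k. Q (repf (B \<union> S) c) (oth (u @ c))}
  = card {c \<in> Cont m k. Q (repf (B \<union> Suc ` S) c) (oth (u @ c))}"
  using fin
proof (induction S arbitrary: B rule: finite_remove_induct)
  case empty then show ?case by simp
next
  case (remove A)
  define M where "M = Max A"
  have MA: "M \<in> A" using remove M_def by simp
  have Mmax: "\<And>a. a \<in> A \<Longrightarrow> a \<le> M" using remove M_def by simp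
  define A' where "A' = A - {M}"
  have A'lt: "\<And>a. a \<in> A' \<Longrightarrow> a < M" using Mmax A'_def by force
  have MAi: "M \<in> {last u<..<m - 1}" using remove.prems MA by blast
  have Mb: "last u < M" "Suc M < m" using MAi by auto
  have swimg: "sw M ` (B \<union> A) = (B \<union> {Suc M}) \<union> A'"
  proof -
    have notB: "M \<notin> B" "Suc M \<notin> B" using remove.prems(2) MA by auto
    have "sw M y = y" if "y \<in> B \<union> A'" for y
      using that notB A'lt by (fastforce simp: sw_def)
    then have "sw M ` (B \<union> A') = B \<union> A'" by (metis image_cong image_ident)
    moreover have "B \<union> A = insert M (B \<union> A')" using MA A'_def by auto
    moreover have "sw M M = Suc M" by (simp add: sw_def)
    ultimately show ?thesis by auto
  qed
  have step1: "card {c \<in> Cont m k. Q (repf (B \<union> A) c) (oth (u @ c))}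
     = card {c \<in> Cont m k. Q (repf ((B \<union> {Suc M}) \<union> A') c) (oth (u @ c))}"
    using swap_count[OF u Mb, of k Q "B \<union> A"] swimg by simp
  have IH: "card {c \<in> Cont m k. Q (repf ((B \<union> {Suc M}) \<union> A') c) (oth (u @ c))}
     = card {c \<in> Cont m k. Q (repf ((B \<union> {Suc M}) \<union> Suc ` A') c) (oth (u @ c))}"
  proof (rule remove.IH[OF MA, folded A'_def])
    show "A' \<subseteq> {last u<..<m - 1}" using remove.prems A'_def by auto
    show "(B \<union> {Suc M}) \<inter> (A' \<union> Suc ` A') = {}"
      using remove.prems(2) A'_def A'lt by fastforce
  qed
  have "(B \<union> {Suc M}) \<union> Suc ` A' = B \<union> Suc ` A" using MA A'_def by auto
  then show ?case using step1 IH by simp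
qed

lemma hyb_step:
  assumes "j < n"
  shows "card {s \<in> inv_seqs n. Q (hyb j s) (oth s)} = card {s \<in> inv_seqs n. Q (hyb (Suc j) s) (oth s)}"
proof -
  let ?m = "Suc j"
  have eq: "card {c \<in> Cont ?m (n - ?m). Q (hyb j (u @ c)) (oth (u @ c))}
          = card {c \<in> Cont ?m (n - ?m). Q (hyb (Suc j) (u @ c)) (oth (u @ c))}"
    if u: "u \<in> inv_seqs ?m" for u
  proof -
    have lu: "length u = ?m" using u by (simp add: inv_seqs_def)
    obtain v x where uv: "u = v @ [x]" using lu by (cases u rule: rev_cases) auto
    have lv: "length v = j" using lu uv by simp
    have vb: "\<forall>i<length v. v ! i \<le> i"
    proof (intro allI impI)
      fix i assume i: "i < length v"
      have "u ! i \<le> i" using u i lv by (simp add: inv_seqs_def)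
      moreover have "u ! i = v ! i" using uv i by (simp add: nth_append)
      ultimately show "v ! i \<le> i" by simp
    qed
    have indep: "Wj j v = Wj (Suc j) v \<and> hyb j v = hyb (Suc j) v" using Wj_hyb_indep lv by simp
    define Y where "Y = Wj j v"
    have Ysub: "Y \<subseteq> {..<j}" using Wj_sub[OF vb] lv Y_def by simp
    have WV: "Wj j u = insert x Y" using uv lv Y_def by (simp add: Wj_snoc)
    have WP: "Wj (Suc j) u = updP Y x" using uv lv Y_def indep by (simp add: Wj_snoc)
    have hh: "hyb j u = hyb (Suc j) u" using uv indep by (simp add: hyb_snoc)
    define B where "B = {y \<in> Y. y < x} \<union> {x}"
    define S where "S = {y \<in> Y. x < y}"
    have WV': "insert x Y = B \<union> S" using B_def S_def by auto
    have WP': "updP Y x = B \<union> Suc ` S" using B_def S_def by (auto simp: updP_def)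
    have lastu: "last u = x" using uv by simp
    have Ssub: "S \<subseteq> {last u<..<?m - 1}" using Ysub S_def lastu by auto
    have Bdisj: "B \<inter> (S \<union> Suc ` S) = {}" using B_def S_def by auto
    have un: "u \<noteq> []" using uv by simp
    have "S \<subseteq> {..<j}" using Ysub S_def by auto
    then have finS: "finite S" using finite_subset by blast
    have e1: "hyb j (u @ c) = hyb j u + repf (B \<union> S) c" for c
      using hyb_append[of j u c] lu WV WV' by simp
    have e2: "hyb (Suc j) (u @ c) = hyb j u + repf (B \<union> Suc ` S) c" for c
      using hyb_append[of "Suc j" u c] lu WP WP' hh by simp
    have "card {c \<in> Cont ?m (n - ?m). Q (hyb j (u @ c)) (oth (u @ c))}
        = card {c \<in> Cont ?m (n - ?m). (\<lambda>r w. Q (hyb j u + r) w) (repf (B \<union> S) c) (oth (u @ c))}"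
      by (simp only: e1)
    also have "\<dots> = card {c \<in> Cont ?m (n - ?m). (\<lambda>r w. Q (hyb j u + r) w) (repf (B \<union> Suc ` S) c) (oth (u @ c))}"
      by (rule rotation[OF u un finS Ssub Bdisj])
    also have "\<dots> = card {c \<in> Cont ?m (n - ?m). Q (hyb (Suc j) (u @ c)) (oth (u @ c))}"
      by (simp only: e2)
    finally show ?thesis .
  qed
  have "card {s \<in> inv_seqs n. Q (hyb j s) (oth s)}
      = (\<Sum>u\<in>inv_seqs ?m. card {c \<in> Cont ?m (n - ?m). Q (hyb j (u @ c)) (oth (u @ c))})"
    using card_split[of ?m n "\<lambda>s. Q (hyb j s) (oth s)"] assms by simp
  also have "\<dots> = (\<Sum>u\<in>inv_seqs ?m. card {c \<in> Cont ?m (n - ?m). Q (hyb (Suc j) (u @ c)) (oth (u @ c))})"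
    using eq by (rule sum.cong[OF refl])
  also have "\<dots> = card {s \<in> inv_seqs n. Q (hyb (Suc j) s) (oth s)}"
    using card_split[of ?m n "\<lambda>s. Q (hyb (Suc j) s) (oth s)"] assms by simp
  finally show ?thesis .
qed

definition iaP :: "nat list \<Rightarrow> nat" where "iaP s = hyb (length s) s"

lemma lemmaL:
  "card {s \<in> inv_seqs n. Q (rep s) (oth s)} = card {s \<in> inv_seqs n. Q (iaP s) (oth s)}"
proof -
  have "j \<le> n \<Longrightarrow> card {s \<in> inv_seqs n. Q (hyb 0 s) (oth s)} = card {s \<in> inv_seqs n. Q (hyb j s) (oth s)}" for j
  proof (induction j)
    case 0 then show ?case by simp
  next
    case (Suc j) then show ?case using hyb_step[of j n Q] by simp
  qed
  from this[of n] have "card {s \<in> inv_seqs n. Q (hyb 0 s) (oth s)} = card {s \<in> inv_seqs n. Q (hyb n s) (oth s)}" by simp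
  moreover have "{s \<in> inv_seqs n. Q (hyb n s) (oth s)} = {s \<in> inv_seqs n. Q (iaP s) (oth s)}"
    by (auto simp: iaP_def inv_seqs_def)
  ultimately show ?thesis by (simp add: hyb_0)
qed



section \<open>Permutations and the decoding map\<close>

definition perms :: "nat \<Rightarrow> nat list set" where
  "perms n = {p. distinct p \<and> set p = {..<n}}"

lemma perms_length: "p \<in> perms n \<Longrightarrow> length p = n"
proof -
  assume "p \<in> perms n"
  then have "distinct p" "set p = {..<n}" by (auto simp: perms_def)
  then show "length p = n" using distinct_card[of p] by simp
qed

lemma finite_perms: "finite (perms n)"
  using finite_permutations_of_set[of "{..<n}"] by (simp add: perms_def permutations_of_set_def conj_commute)

lemma card_perms: "card (perms n) = fact n"
proof -
  have "perms n = permutations_of_set {..<n}" by (auto simp: perms_def permutations_of_set_def)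
  then show ?thesis by simp
qed

lemma perms_nth_lt: "p \<in> perms n \<Longrightarrow> i < n \<Longrightarrow> p ! i < n"
proof -
  assume a: "p \<in> perms n" "i < n"
  then have "p ! i \<in> set p" using perms_length[OF a(1)] by simp
  then show "p ! i < n" using a by (auto simp: perms_def)
qed

lemma perms_nth_inj: "p \<in> perms n \<Longrightarrow> i < n \<Longrightarrow> j < n \<Longrightarrow> p ! i = p ! j \<longleftrightarrow> i = j"
proof -
  assume a: "p \<in> perms n" "i < n" "j < n"
  then have "distinct p" by (simp add: perms_def)
  then show ?thesis using a perms_length[OF a(1)] by (simp add: nth_eq_iff_index_eq)
qed

definition sh :: "nat \<Rightarrow> nat \<Rightarrow> nat" where "sh v y = (if v \<le> y then Suc y else y)"

lemma sh_less_iff[simp]: "sh v a < sh v b \<longleftrightarrow> a < b" by (auto simp: sh_def)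
lemma sh_eq_iff[simp]: "sh v a = sh v b \<longleftrightarrow> a = b" by (auto simp: sh_def)
lemma sh_neq_v[simp]: "sh v a \<noteq> v" by (auto simp: sh_def)

definition app :: "nat \<Rightarrow> nat list \<Rightarrow> nat list" where "app v p = map (sh v) p @ [v]"

lemma app_length[simp]: "length (app v p) = Suc (length p)" by (simp add: app_def)
lemma app_nth_lt: "i < length p \<Longrightarrow> app v p ! i = sh v (p ! i)" by (simp add: app_def nth_append)
lemma app_nth_last: "app v p ! length p = v" by (simp add: app_def nth_append)

lemma app_perm: assumes "p \<in> perms n" "v \<le> n" shows "app v p \<in> perms (Suc n)"
proof -
  have d: "distinct p" and sp: "set p = {..<n}" using assms by (auto simp: perms_def)
  have inj: "inj (sh v)" by (rule injI) simp
  have "distinct (map (sh v) p)" using d inj by (simp add: distinct_map inj_on_def)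
  moreover have "v \<notin> set (map (sh v) p)" by (auto simp: sh_def)
  moreover have "sh v ` {..<n} \<union> {v} = {..<Suc n}"
  proof (intro equalityI subsetI)
    fix w assume "w \<in> sh v ` {..<n} \<union> {v}" then show "w \<in> {..<Suc n}" using assms by (auto simp: sh_def)
  next
    fix w assume w: "w \<in> {..<Suc n}"
    show "w \<in> sh v ` {..<n} \<union> {v}"
    proof (cases "w < v")
      case True then have "w = sh v w" "w < n" using assms by (auto simp: sh_def)
      then show ?thesis by blast
    next
      case False
      show ?thesis
      proof (cases "w = v")
        case True then show ?thesis by simp
      next
        case False
        then have "w = sh v (w - 1)" "w - 1 < n" using \<open>\<not> w < v\<close> w by (auto simp: sh_def)
        then show ?thesis by blast
      qed
    qed
  qed
  ultimately show ?thesis using sp by (simp add: perms_def app_def)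
qed

primrec decr :: "nat list \<Rightarrow> nat list" where
  "decr [] = []"
| "decr (x # r) = app (length r - x) (decr r)"

definition decode :: "nat list \<Rightarrow> nat list" where "decode s = decr (rev s)"

lemma decode_Nil[simp]: "decode [] = []" by (simp add: decode_def)
lemma decode_snoc: "decode (s @ [x]) = app (length s - x) (decode s)" by (simp add: decode_def)

lemma decode_perm: "s \<in> inv_seqs n \<Longrightarrow> decode s \<in> perms n"
proof (induction n arbitrary: s)
  case 0 then show ?case by (simp add: inv_seqs_def perms_def)
next
  case (Suc n)
  then obtain s' x where s: "s = s' @ [x]" "s' \<in> inv_seqs n" "x \<le> n" unfolding inv_seqs_Suc by auto
  then have "length s' = n" by (simp add: inv_seqs_def)
  then show ?case using s Suc.IH app_perm by (simp add: decode_snoc)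
qed

definition cnt :: "nat list \<Rightarrow> nat \<Rightarrow> nat" where
  "cnt p i = card {j. j < i \<and> p ! i < p ! j}"

lemma decode_code: "s \<in> inv_seqs n \<Longrightarrow> i < n \<Longrightarrow> s ! i = cnt (decode s) i"
proof (induction n arbitrary: s i)
  case 0 then show ?case by simp
next
  case (Suc n)
  then obtain s' x where s: "s = s' @ [x]" "s' \<in> inv_seqs n" "x \<le> n" unfolding inv_seqs_Suc by auto
  have ls': "length s' = n" using s by (simp add: inv_seqs_def)
  define p where "p = decode s'"
  have pp: "p \<in> perms n" using decode_perm[OF s(2)] p_def by simp
  have lp: "length p = n" using perms_length[OF pp] .
  have ds: "decode s = app (n - x) p" using s ls' p_def by (simp add: decode_snoc)
  show ?case
  proof (cases "i < n")
    case True
    have "cnt (decode s) i = cnt p i"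
    proof -
      have "{j. j < i \<and> decode s ! i < decode s ! j} = {j. j < i \<and> p ! i < p ! j}"
        using True lp by (auto simp: ds app_nth_lt)
      then show ?thesis by (simp add: cnt_def)
    qed
    moreover have "s ! i = s' ! i" using True ls' s by (simp add: nth_append)
    ultimately show ?thesis using Suc.IH[OF s(2) True] p_def by simp
  next
    case False
    then have i: "i = n" using Suc.prems by simp
    have "s ! i = x" using i s ls' by (metis nth_append_length)
    have set_eq: "{j. j < i \<and> decode s ! i < decode s ! j} = {j. j < n \<and> n - x \<le> p ! j}"
      using i lp by (auto simp: ds app_nth_lt app_nth_last[of "n - x" p, simplified lp] sh_def split: if_splits)
    have bij: "bij_betw (\<lambda>j. p ! j) {j. j < n \<and> n - x \<le> p ! j} {n - x..<n}"
    proof (rule bij_betw_imageI)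
      show "inj_on (\<lambda>j. p ! j) {j. j < n \<and> n - x \<le> p ! j}"
        using perms_nth_inj[OF pp] by (auto simp: inj_on_def)
      show "(\<lambda>j. p ! j) ` {j. j < n \<and> n - x \<le> p ! j} = {n - x..<n}"
      proof (intro equalityI subsetI)
        fix y assume "y \<in> (\<lambda>j. p ! j) ` {j. j < n \<and> n - x \<le> p ! j}"
        then show "y \<in> {n - x..<n}" using perms_nth_lt[OF pp] by auto
      next
        fix y assume y: "y \<in> {n - x..<n}"
        then have "y \<in> set p" using pp by (auto simp: perms_def)
        then obtain j where "j < n" "p ! j = y" using lp by (auto simp: in_set_conv_nth)
        then show "y \<in> (\<lambda>j. p ! j) ` {j. j < n \<and> n - x \<le> p ! j}" using y by force
      qed
    qed
    have "cnt (decode s) i = x"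
      unfolding cnt_def set_eq using bij_betw_same_card[OF bij] s(3) by simp
    then show ?thesis using \<open>s ! i = x\<close> by simp
  qed
qed

lemma decode_bij: "bij_betw decode (inv_seqs n) (perms n)"
proof -
  have inj: "inj_on decode (inv_seqs n)"
  proof (rule inj_onI)
    fix s t assume s: "s \<in> inv_seqs n" and t: "t \<in> inv_seqs n" and e: "decode s = decode t"
    show "s = t"
    proof (rule nth_equalityI)
      show "length s = length t" using s t by (simp add: inv_seqs_def)
      fix i assume "i < length s"
      then have "i < n" using s by (simp add: inv_seqs_def)
      then show "s ! i = t ! i" using decode_code[OF s] decode_code[OF t] e by simp
    qed
  qed
  have sub: "decode ` inv_seqs n \<subseteq> perms n" using decode_perm by auto
  have "card (decode ` inv_seqs n) = card (perms n)"
    using card_image[OF inj] card_inv_seqs card_perms by simp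
  then have "decode ` inv_seqs n = perms n"
    using card_subset_eq[OF finite_perms sub] by simp
  then show ?thesis using inj by (simp add: bij_betw_def)
qed



section \<open>Statistics transported along the decoding map\<close>

definition des :: "nat list \<Rightarrow> nat" where
  "des p = card {i. Suc i < length p \<and> p ! Suc i < p ! i}"
definition lrmax :: "nat list \<Rightarrow> nat" where
  "lrmax p = card {i. i < length p \<and> (\<forall>j<i. p ! j < p ! i)}"
definition lrmin :: "nat list \<Rightarrow> nat" where
  "lrmin p = card {i. i < length p \<and> (\<forall>j<i. p ! i < p ! j)}"
definition rlmax :: "nat list \<Rightarrow> nat" where
  "rlmax p = card {i. i < length p \<and> (\<forall>j. i < j \<and> j < length p \<longrightarrow> p ! j < p ! i)}"

lemma cnt_sub: "{j. j < i \<and> p ! i < p ! j} \<subseteq> {..<i}" by auto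
lemma finite_cnt: "finite {j. j < (i::nat) \<and> P j}" by (rule finite_subset[of _ "{..<i}"]) (auto simp: finite_lessThan)

lemma cnt_asc:
  assumes pp: "p \<in> perms n" and k: "Suc k < n"
  shows "cnt p k < cnt p (Suc k) \<longleftrightarrow> p ! Suc k < p ! k"
proof
  assume lt: "p ! Suc k < p ! k"
  have "insert k {j. j < k \<and> p ! k < p ! j} \<subseteq> {j. j < Suc k \<and> p ! Suc k < p ! j}"
    using lt by auto
  then have "card (insert k {j. j < k \<and> p ! k < p ! j}) \<le> card {j. j < Suc k \<and> p ! Suc k < p ! j}"
    by (rule card_mono[OF finite_cnt])
  moreover have "card (insert k {j. j < k \<and> p ! k < p ! j}) = Suc (cnt p k)"
    unfolding cnt_def by (rule card_insert_disjoint[OF finite_cnt]) simp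
  ultimately have "Suc (cnt p k) \<le> cnt p (Suc k)" unfolding cnt_def by simp
  then show "cnt p k < cnt p (Suc k)" by simp
next
  assume lt: "cnt p k < cnt p (Suc k)"
  show "p ! Suc k < p ! k"
  proof (rule ccontr)
    assume "\<not> p ! Suc k < p ! k"
    moreover have "p ! Suc k \<noteq> p ! k" using perms_nth_inj[OF pp, of "Suc k" k] k by simp
    ultimately have gt: "p ! k < p ! Suc k" by simp
    have "{j. j < Suc k \<and> p ! Suc k < p ! j} \<subseteq> {j. j < k \<and> p ! k < p ! j}"
    proof
      fix j assume "j \<in> {j. j < Suc k \<and> p ! Suc k < p ! j}"
      then have "j < Suc k" "p ! Suc k < p ! j" by auto
      moreover have "j \<noteq> k" using gt \<open>p ! Suc k < p ! j\<close> by auto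
      ultimately show "j \<in> {j. j < k \<and> p ! k < p ! j}" using gt by auto
    qed
    then have "cnt p (Suc k) \<le> cnt p k" unfolding cnt_def by (simp add: card_mono)
    then show False using lt by simp
  qed
qed

lemma cnt_zero:
  assumes pp: "p \<in> perms n" and k: "k < n"
  shows "cnt p k = 0 \<longleftrightarrow> (\<forall>j<k. p ! j < p ! k)"
proof -
  have "cnt p k = 0 \<longleftrightarrow> {j. j < k \<and> p ! k < p ! j} = {}" unfolding cnt_def by simp
  also have "\<dots> \<longleftrightarrow> (\<forall>j<k. p ! j < p ! k)"
  proof
    assume e: "{j. j < k \<and> p ! k < p ! j} = {}"
    show "\<forall>j<k. p ! j < p ! k"
    proof (intro allI impI)
      fix j assume j: "j < k"
      then have "\<not> p ! k < p ! j" using e by auto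
      moreover have "p ! j \<noteq> p ! k" using perms_nth_inj[OF pp, of j k] j k by simp
      ultimately show "p ! j < p ! k" by simp
    qed
  next
    assume "\<forall>j<k. p ! j < p ! k"
    then show "{j. j < k \<and> p ! k < p ! j} = {}" by fastforce
  qed
  finally show ?thesis .
qed

lemma cnt_max:
  assumes pp: "p \<in> perms n" and k: "k < n"
  shows "cnt p k = k \<longleftrightarrow> (\<forall>j<k. p ! k < p ! j)"
proof
  assume e: "cnt p k = k"
  have "{j. j < k \<and> p ! k < p ! j} = {..<k}"
    using card_subset_eq[OF finite_lessThan cnt_sub] e by (simp add: cnt_def)
  then show "\<forall>j<k. p ! k < p ! j" by auto
next
  assume "\<forall>j<k. p ! k < p ! j"
  then have "{j. j < k \<and> p ! k < p ! j} = {..<k}" by auto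
  then show "cnt p k = k" by (simp add: cnt_def)
qed

lemma cnt_RL:
  assumes pp: "p \<in> perms n" and k: "k < n"
  shows "(\<forall>j. k < j \<and> j < n \<longrightarrow> cnt p k < cnt p j) \<longleftrightarrow> (\<forall>j. k < j \<and> j < n \<longrightarrow> p ! j < p ! k)"
proof
  assume H: "\<forall>j. k < j \<and> j < n \<longrightarrow> cnt p k < cnt p j"
  show "\<forall>j. k < j \<and> j < n \<longrightarrow> p ! j < p ! k"
  proof (rule ccontr)
    assume "\<not> (\<forall>j. k < j \<and> j < n \<longrightarrow> p ! j < p ! k)"
    then obtain j0 where j0: "k < j0" "j0 < n" "\<not> p ! j0 < p ! k" by blast
    have "p ! j0 \<noteq> p ! k" using perms_nth_inj[OF pp, of j0 k] j0 k by simp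
    then have ex: "\<exists>j. k < j \<and> j < n \<and> p ! k < p ! j" using j0 by (intro exI[of _ j0]) simp
    define j where "j = (LEAST j. k < j \<and> j < n \<and> p ! k < p ! j)"
    have j: "k < j" "j < n" "p ! k < p ! j" using LeastI_ex[OF ex] j_def by auto
    have jmin: "\<not> p ! k < p ! i" if "k < i" "i < j" for i
    proof
      assume "p ! k < p ! i"
      then have "k < i \<and> i < n \<and> p ! k < p ! i" using that j(2) by simp
      then have "j \<le> i" unfolding j_def by (rule Least_le)
      then show False using that by simp
    qed
    have "{i. i < j \<and> p ! j < p ! i} \<subseteq> {i. i < k \<and> p ! k < p ! i}"
    proof
      fix i assume "i \<in> {i. i < j \<and> p ! j < p ! i}"
      then have i: "i < j" "p ! j < p ! i" by auto
      have "\<not> (k \<le> i)"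
      proof
        assume "k \<le> i"
        then consider "i = k" | "k < i" by arith
        then show False
        proof cases
          case 1 then show False using i j by simp
        next
          case 2 then show False using jmin[OF 2 i(1)] i j by simp
        qed
      qed
      then show "i \<in> {i. i < k \<and> p ! k < p ! i}" using i j by auto
    qed
    then have "cnt p j \<le> cnt p k" unfolding cnt_def by (simp add: card_mono)
    then show False using H j by fastforce
  qed
next
  assume H: "\<forall>j. k < j \<and> j < n \<longrightarrow> p ! j < p ! k"
  show "\<forall>j. k < j \<and> j < n \<longrightarrow> cnt p k < cnt p j"
  proof (intro allI impI)
    fix j assume j: "k < j \<and> j < n"
    then have lt: "p ! j < p ! k" using H by simp
    have "insert k {i. i < k \<and> p ! k < p ! i} \<subseteq> {i. i < j \<and> p ! j < p ! i}"
      using lt j by auto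
    then have "card (insert k {i. i < k \<and> p ! k < p ! i}) \<le> card {i. i < j \<and> p ! j < p ! i}"
      by (rule card_mono[OF finite_cnt])
    moreover have "card (insert k {i. i < k \<and> p ! k < p ! i}) = Suc (cnt p k)"
      unfolding cnt_def by (rule card_insert_disjoint[OF finite_cnt]) simp
    ultimately have "Suc (cnt p k) \<le> cnt p j" unfolding cnt_def by simp
    then show "cnt p k < cnt p j" by simp
  qed
qed

lemma stats_decode:
  assumes s: "s \<in> inv_seqs n"
  shows "asc s = des (decode s)" "zero s = lrmax (decode s)" "maxst s = lrmin (decode s)"
    "rmin s = rlmax (decode s)"
proof -
  define p where "p = decode s"
  have pp: "p \<in> perms n" using decode_perm[OF s] p_def by simp
  have lp: "length p = n" using perms_length[OF pp] .
  have ls: "length s = n" using s by (simp add: inv_seqs_def)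
  have c: "\<And>i. i < n \<Longrightarrow> s ! i = cnt p i" using decode_code[OF s] p_def by simp
  have "{k. Suc k < length s \<and> s ! k < s ! Suc k} = {i. Suc i < length p \<and> p ! Suc i < p ! i}"
    using cnt_asc[OF pp] c ls lp by auto
  then show "asc s = des (decode s)" by (simp add: asc_def des_def p_def)
  have "{k. k < length s \<and> s ! k = 0} = {i. i < length p \<and> (\<forall>j<i. p ! j < p ! i)}"
    using cnt_zero[OF pp] c ls lp by auto
  then show "zero s = lrmax (decode s)" by (simp add: zero_def lrmax_def p_def)
  have "{k. k < length s \<and> s ! k = k} = {i. i < length p \<and> (\<forall>j<i. p ! i < p ! j)}"
    using cnt_max[OF pp] c ls lp by auto
  then show "maxst s = lrmin (decode s)" by (simp add: maxst_def lrmin_def p_def)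
  have "RL s k \<longleftrightarrow> (\<forall>j. k < j \<and> j < n \<longrightarrow> p ! j < p ! k)" if k: "k < n" for k
  proof -
    have "RL s k \<longleftrightarrow> (\<forall>j. k < j \<and> j < n \<longrightarrow> cnt p k < cnt p j)"
      unfolding RL_def using c k ls by auto
    then show ?thesis using cnt_RL[OF pp k] by simp
  qed
  then have "{k. k < length s \<and> RL s k} = {i. i < length p \<and> (\<forall>j. i < j \<and> j < length p \<longrightarrow> p ! j < p ! i)}"
    using ls lp by auto
  then show "rmin s = rlmax (decode s)" by (simp add: rmin_card rlmax_def p_def)
qed



section \<open>Inverse descents\<close>

definition idx :: "nat list \<Rightarrow> nat \<Rightarrow> nat" where
  "idx q w = (THE i. i < length q \<and> q ! i = w)"

lemma idx_nth: "distinct q \<Longrightarrow> i < length q \<Longrightarrow> idx q (q ! i) = i"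
  unfolding idx_def by (rule the_equality) (auto simp: nth_eq_iff_index_eq)

lemma idx_props: assumes "distinct q" "w \<in> set q" shows "idx q w < length q" "q ! idx q w = w"
proof -
  obtain i where i: "i < length q" "q ! i = w" using assms(2) by (auto simp: in_set_conv_nth)
  then show "idx q w < length q" "q ! idx q w = w" using idx_nth[OF assms(1) i(1)] by auto
qed

lemma perms_idx: assumes "p \<in> perms n" "w < n" shows "idx p w < n" "p ! idx p w = w"
proof -
  have "distinct p" "w \<in> set p" using assms by (auto simp: perms_def)
  then show "idx p w < n" "p ! idx p w = w" using idx_props perms_length[OF assms(1)] by auto
qed

lemma perms_idx_inj: assumes "p \<in> perms n" "a < n" "b < n" shows "idx p a = idx p b \<longleftrightarrow> a = b"
proof
  assume "idx p a = idx p b"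
  then have "p ! idx p a = p ! idx p b" by simp
  then show "a = b" using perms_idx[OF assms(1) assms(2)] perms_idx[OF assms(1) assms(3)] by simp
qed simp

definition iasc :: "nat list \<Rightarrow> nat" where
  "iasc q = card {w. Suc w < length q \<and> idx q w < idx q (Suc w)}"

definition Yp :: "nat list \<Rightarrow> nat set" where
  "Yp q = {x. x < length q \<and> (x = 0 \<or> idx q (length q - x) < idx q (length q - Suc x))}"

lemma idx_app:
  assumes pp: "p \<in> perms n" and v: "v \<le> n" and w: "w \<le> n"
  shows "idx (app v p) w = (if w < v then idx p w else if w = v then n else idx p (w - 1))"
proof -
  have ap: "app v p \<in> perms (Suc n)" using app_perm[OF pp v] .
  have dq: "distinct (app v p)" using ap by (simp add: perms_def)
  have lp: "length p = n" using perms_length[OF pp] .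
  show ?thesis
  proof (cases "w < v")
    case True
    then have wn: "w < n" using v by simp
    have "app v p ! idx p w = sh v (p ! idx p w)" using perms_idx[OF pp wn] lp by (simp add: app_nth_lt)
    also have "\<dots> = w" using perms_idx[OF pp wn] True by (simp add: sh_def)
    finally have e: "app v p ! idx p w = w" .
    have "idx (app v p) (app v p ! idx p w) = idx p w"
      by (rule idx_nth[OF dq]) (use perms_idx[OF pp wn] lp in simp)
    then show ?thesis using True e by simp
  next
    case False
    show ?thesis
    proof (cases "w = v")
      case True
      have "idx (app v p) (app v p ! n) = n" using idx_nth[OF dq, of n] lp by simp
      then show ?thesis using True app_nth_last[of v p] lp by simp
    next
      case False
      then have w1: "w - 1 < n" "v \<le> w - 1" using \<open>\<not> w < v\<close> w by auto
      have "app v p ! idx p (w - 1) = sh v (p ! idx p (w - 1))" using perms_idx[OF pp w1(1)] lp by (simp add: app_nth_lt)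
      also have "\<dots> = w" using perms_idx[OF pp w1(1)] w1 False \<open>\<not> w < v\<close> by (simp add: sh_def)
      finally have e: "app v p ! idx p (w - 1) = w" .
      have "idx (app v p) (app v p ! idx p (w - 1)) = idx p (w - 1)"
        by (rule idx_nth[OF dq]) (use perms_idx[OF pp w1(1)] lp in simp)
      then show ?thesis using False \<open>\<not> w < v\<close> e by simp
    qed
  qed
qed

lemma Yp_sub: "Yp q \<subseteq> {..<length q}" by (auto simp: Yp_def)

lemma Yp_app:
  assumes pp: "p \<in> perms n" and v: "v \<le> n"
  shows "Yp (app v p) = updP (Yp p) (n - v)"
proof -
  have lp: "length p = n" using perms_length[OF pp] .
  define x where "x = n - v"
  have vx: "v = n - x" "x \<le> n" using v x_def by auto
  have I: "\<And>w. w \<le> n \<Longrightarrow> idx (app v p) w = (if w < v then idx p w else if w = v then n else idx p (w - 1))"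
    using idx_app[OF pp v] by simp
  have Ilt: "\<And>w. w < n \<Longrightarrow> idx p w < n" using perms_idx[OF pp] by simp
  have memY: "\<And>z. z \<in> Yp p \<longleftrightarrow> z < n \<and> (z = 0 \<or> idx p (n - z) < idx p (n - Suc z))"
    using lp by (simp add: Yp_def)
  have "y \<in> Yp (app v p) \<longleftrightarrow> y \<in> updP (Yp p) x" for y
  proof -
    have L: "y \<in> Yp (app v p) \<longleftrightarrow> y < Suc n \<and> (y = 0 \<or> idx (app v p) (Suc n - y) < idx (app v p) (n - y))"
      using lp by (simp add: Yp_def)
    have R: "y \<in> updP (Yp p) x \<longleftrightarrow> (y \<in> Yp p \<and> y < x) \<or> y = x \<or> (1 \<le> y \<and> y - 1 \<in> Yp p \<and> x < y - 1)"
    proof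
      assume "y \<in> updP (Yp p) x"
      then show "(y \<in> Yp p \<and> y < x) \<or> y = x \<or> (1 \<le> y \<and> y - 1 \<in> Yp p \<and> x < y - 1)"
        unfolding updP_def by auto
    next
      assume "(y \<in> Yp p \<and> y < x) \<or> y = x \<or> (1 \<le> y \<and> y - 1 \<in> Yp p \<and> x < y - 1)"
      then consider "y \<in> Yp p \<and> y < x" | "y = x" | "1 \<le> y \<and> y - 1 \<in> Yp p \<and> x < y - 1" by blast
      then show "y \<in> updP (Yp p) x"
      proof cases
        case 3
        then have "y = Suc (y - 1)" by simp
        then have "y \<in> Suc ` {z \<in> Yp p. x < z}" using 3 by blast
        then show ?thesis unfolding updP_def by blast
      qed (auto simp: updP_def)
    qed
    consider "y = 0" | "y > n" | "1 \<le> y \<and> y \<le> n \<and> y < x" | "1 \<le> y \<and> y = x" | "1 \<le> y \<and> y \<le> n \<and> y = Suc x"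
      | "1 \<le> y \<and> y \<le> n \<and> Suc x < y" by arith
    then show ?thesis
    proof cases
      case 1
      have "y \<in> Yp (app v p)" using 1 L by simp
      moreover have "y \<in> updP (Yp p) x"
      proof (cases "x = 0")
        case True then show ?thesis using 1 R by simp
      next
        case False
        then have "0 \<in> Yp p" using memY vx by simp
        then show ?thesis using 1 R False by simp
      qed
      ultimately show ?thesis by simp
    next
      case 2
      have "y \<notin> Yp (app v p)" using 2 L by simp
      moreover have "y \<notin> Yp p" "y - 1 \<notin> Yp p" using 2 memY by auto
      moreover have "y \<noteq> x" using 2 vx by simp
      ultimately show ?thesis using R by blast
    next
      case 3
      then have a: "Suc n - y > v" "n - y > v" "Suc n - y \<le> n" "n - y \<le> n" using vx by auto
      have "idx (app v p) (Suc n - y) = idx p (n - y)" using I[OF a(3)] a by simp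
      moreover have "idx (app v p) (n - y) = idx p (n - Suc y)" using I[OF a(4)] a by simp
      ultimately have "y \<in> Yp (app v p) \<longleftrightarrow> idx p (n - y) < idx p (n - Suc y)" using L 3 by simp
      moreover have "y \<in> updP (Yp p) x \<longleftrightarrow> y \<in> Yp p" using R 3 by auto
      moreover have "y \<in> Yp p \<longleftrightarrow> idx p (n - y) < idx p (n - Suc y)" using memY 3 vx by auto
      ultimately show ?thesis by simp
    next
      case 4
      then have a: "Suc n - y = Suc v" "n - y = v" using vx by auto
      have sv: "Suc v \<le> n" using 4 vx by arith
      have "idx (app v p) (Suc n - y) = idx p v" using I[OF sv] a by simp
      moreover have "idx (app v p) (n - y) = n" using I[of v] a vx by simp
      moreover have "idx p v < n" using Ilt vx 4 by simp
      ultimately have "y \<in> Yp (app v p)" using L 4 vx by simp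
      moreover have "y \<in> updP (Yp p) x" using R 4 by simp
      ultimately show ?thesis by simp
    next
      case 5
      then have a: "Suc n - y = v" "n - y = v - 1" "v \<ge> 1" using vx by auto
      have "idx (app v p) (Suc n - y) = n" using I[of v] a vx by simp
      moreover have "idx (app v p) (n - y) = idx p (v - 1)"
      proof -
        have "v - 1 \<le> n" "v - 1 < v" using a vx by auto
        then show ?thesis using I[of "v - 1"] a(2) by simp
      qed
      moreover have "idx p (v - 1) < n" using Ilt a vx by simp
      ultimately have "y \<notin> Yp (app v p)" using L 5 by simp
      moreover have "y \<notin> updP (Yp p) x" using R 5 by simp
      ultimately show ?thesis by simp
    next
      case 6
      then have a: "Suc n - y < v" "n - y < v" using vx by auto
      have "idx (app v p) (Suc n - y) = idx p (Suc n - y)" using I[of "Suc n - y"] a vx by simp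
      moreover have "idx (app v p) (n - y) = idx p (n - y)" using I[of "n - y"] a vx by simp
      ultimately have "y \<in> Yp (app v p) \<longleftrightarrow> idx p (Suc n - y) < idx p (n - y)" using L 6 by simp
      moreover have "y - 1 \<in> Yp p \<longleftrightarrow> idx p (Suc n - y) < idx p (n - y)"
      proof -
        have "n - (y - 1) = Suc n - y" "n - Suc (y - 1) = n - y" "y - 1 < n" "y - 1 \<noteq> 0" using 6 by auto
        then show ?thesis using memY[of "y - 1"] by simp
      qed
      moreover have "y \<in> updP (Yp p) x \<longleftrightarrow> y - 1 \<in> Yp p" using R 6 by auto
      ultimately show ?thesis by simp
    qed
  qed
  then show ?thesis using x_def by blast
qed

lemma card_updP:
  assumes "finite Y" shows "card (updP Y x) = card Y + (if x \<in> Y then 0 else 1)"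
proof -
  let ?A = "{y \<in> Y. y < x}" and ?C = "{y \<in> Y. x < y}"
  have fA: "finite ?A" and fC: "finite ?C" using assms by auto
  have "updP Y x = ?A \<union> (insert x (Suc ` ?C))" by (auto simp: updP_def)
  moreover have "?A \<inter> insert x (Suc ` ?C) = {}" by auto
  moreover have "x \<notin> Suc ` ?C" by auto
  ultimately have c1: "card (updP Y x) = card ?A + Suc (card ?C)"
    using fA fC by (simp add: card_Un_disjoint card_image)
  have Y: "Y = ?A \<union> (({x} \<inter> Y) \<union> ?C)" by auto
  have f2: "finite ({x} \<inter> Y)" by simp
  have "card (({x} \<inter> Y) \<union> ?C) = card ({x} \<inter> Y) + card ?C"
    by (rule card_Un_disjoint[OF f2 fC]) auto
  moreover have "card (?A \<union> (({x} \<inter> Y) \<union> ?C)) = card ?A + card (({x} \<inter> Y) \<union> ?C)"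
    by (rule card_Un_disjoint) (use fA fC in auto)
  ultimately have "card Y = card ?A + (card ({x} \<inter> Y) + card ?C)" using Y by simp
  moreover have "card ({x} \<inter> Y) = (if x \<in> Y then 1 else 0)" by auto
  ultimately show ?thesis using c1 by auto
qed

lemma iasc_Yp: assumes pp: "p \<in> perms n" shows "iasc p = n - card (Yp p)"
proof (cases "n = 0")
  case True then show ?thesis using perms_length[OF pp] by (simp add: iasc_def Yp_def)
next
  case False
  have lp: "length p = n" using perms_length[OF pp] .
  define IA where "IA = {w. Suc w < n \<and> idx p w < idx p (Suc w)}"
  define ID where "ID = {w. Suc w < n \<and> idx p (Suc w) < idx p w}"
  have un: "IA \<union> ID = {..<n - 1}"
  proof (intro equalityI subsetI)
    fix w assume "w \<in> IA \<union> ID" then show "w \<in> {..<n - 1}" by (auto simp: IA_def ID_def)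
  next
    fix w assume w: "w \<in> {..<n - 1}"
    then have "idx p w \<noteq> idx p (Suc w)" using perms_idx_inj[OF pp, of w "Suc w"] by auto
    then show "w \<in> IA \<union> ID" using w by (auto simp: IA_def ID_def)
  qed
  have dis: "IA \<inter> ID = {}" by (auto simp: IA_def ID_def)
  have "finite (IA \<union> ID)" using un by simp
  then have fin: "finite IA" "finite ID" by auto
  have cIA: "card IA + card ID = n - 1" using card_Un_disjoint[OF fin dis] un by simp
  have Yeq: "Yp p = insert 0 ((\<lambda>w. n - Suc w) ` ID)"
  proof (intro equalityI subsetI)
    fix x assume x: "x \<in> Yp p"
    show "x \<in> insert 0 ((\<lambda>w. n - Suc w) ` ID)"
    proof (cases "x = 0")
      case True then show ?thesis by simp
    next
      case False
      then have "x < n" "idx p (n - x) < idx p (n - Suc x)" using x lp by (auto simp: Yp_def)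
      then have "n - Suc x \<in> ID" "x = n - Suc (n - Suc x)" using False by (auto simp: ID_def Suc_diff_Suc)
      then show ?thesis by blast
    qed
  next
    fix x assume "x \<in> insert 0 ((\<lambda>w. n - Suc w) ` ID)"
    then show "x \<in> Yp p"
    proof
      assume "x = 0" then show ?thesis using False lp by (simp add: Yp_def)
    next
      assume "x \<in> (\<lambda>w. n - Suc w) ` ID"
      then obtain w where w: "w \<in> ID" "x = n - Suc w" by auto
      then have "n - x = Suc w" "n - Suc x = w" "x < n" "x \<noteq> 0" by (auto simp: ID_def)
      then show ?thesis using w lp by (simp add: Yp_def ID_def)
    qed
  qed
  have inj: "inj_on (\<lambda>w. n - Suc w) ID" by (rule inj_onI) (auto simp: ID_def)
  have "0 \<notin> (\<lambda>w. n - Suc w) ` ID" by (auto simp: ID_def)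
  then have "card (Yp p) = Suc (card ID)"
    using Yeq card_image[OF inj] fin by (simp add: card_insert_if)
  then show ?thesis using cIA lp by (simp add: iasc_def IA_def)
qed

lemma iasc_app:
  assumes pp: "p \<in> perms n" and v: "v \<le> n"
  shows "iasc (app v p) = iasc p + (if n - v \<in> Yp p then 1 else 0)"
proof -
  have fin: "finite (Yp p)" using Yp_sub finite_subset by blast
  have le: "card (Yp p) \<le> n" using card_mono[OF _ Yp_sub, of p] perms_length[OF pp] by simp
  have "iasc (app v p) = Suc n - card (Yp (app v p))" using iasc_Yp[OF app_perm[OF pp v]] .
  also have "\<dots> = Suc n - (card (Yp p) + (if n - v \<in> Yp p then 0 else 1))"
    using Yp_app[OF pp v] card_updP[OF fin] by simp
  also have "\<dots> = iasc p + (if n - v \<in> Yp p then 1 else 0)"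
    using iasc_Yp[OF pp] le by auto
  finally show ?thesis .
qed

definition YP :: "nat list \<Rightarrow> nat set" where "YP s = Wj (length s) s"

lemma iaP_decode: "s \<in> inv_seqs n \<Longrightarrow> Yp (decode s) = YP s \<and> iasc (decode s) = iaP s"
proof (induction n arbitrary: s)
  case 0 then show ?case by (simp add: inv_seqs_def YP_def iaP_def Yp_def iasc_def)
next
  case (Suc n)
  then obtain s' x where s: "s = s' @ [x]" "s' \<in> inv_seqs n" "x \<le> n" unfolding inv_seqs_Suc by auto
  have ls': "length s' = n" using s by (simp add: inv_seqs_def)
  define p where "p = decode s'"
  have pp: "p \<in> perms n" using decode_perm[OF s(2)] p_def by simp
  have IH: "Yp p = YP s'" "iasc p = iaP s'" using Suc.IH[OF s(2)] p_def by auto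
  have ds: "decode s = app (n - x) p" using s ls' p_def by (simp add: decode_snoc)
  have nx: "n - (n - x) = x" using s(3) by simp
  have indep: "Wj (Suc n) s' = Wj n s' \<and> hyb (Suc n) s' = hyb n s'" using Wj_hyb_indep[of s' "Suc n" n] ls' by simp
  have "Yp (decode s) = updP (YP s') x" using Yp_app[OF pp, of "n - x"] ds nx IH by simp
  moreover have "YP s = updP (YP s') x" using s ls' indep by (simp add: YP_def Wj_snoc)
  moreover have "iasc (decode s) = iaP s' + (if x \<in> YP s' then 1 else 0)"
    using iasc_app[OF pp, of "n - x"] ds nx IH by simp
  moreover have "iaP s = iaP s' + (if x \<in> YP s' then 1 else 0)"
    using s ls' indep by (simp add: iaP_def YP_def hyb_snoc)
  ultimately show ?case by simp
qed



section \<open>The symmetry on permutations\<close>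

definition gsym :: "nat list \<Rightarrow> nat list" where
  "gsym p = map (\<lambda>v. length p - 1 - idx p v) [0..<length p]"

lemma gsym_length[simp]: "length (gsym p) = length p" by (simp add: gsym_def)

lemma gsym_nth: "v < length p \<Longrightarrow> gsym p ! v = length p - 1 - idx p v"
  by (simp add: gsym_def)

lemma gsym_perm: assumes pp: "p \<in> perms n" shows "gsym p \<in> perms n"
proof -
  have lp: "length p = n" using perms_length[OF pp] .
  have dist: "distinct (gsym p)"
  proof (subst distinct_conv_nth, intro allI impI)
    fix i j assume ij: "i < length (gsym p)" "j < length (gsym p)" "i \<noteq> j"
    then have "i < n" "j < n" using lp by auto
    then have "idx p i < n" "idx p j < n" "idx p i \<noteq> idx p j"
      using perms_idx[OF pp] perms_idx_inj[OF pp] ij(3) by auto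
    then show "gsym p ! i \<noteq> gsym p ! j" using gsym_nth lp \<open>i < n\<close> \<open>j < n\<close> by auto
  qed
  have sub: "set (gsym p) \<subseteq> {..<n}"
  proof
    fix y assume "y \<in> set (gsym p)"
    then obtain v where "v < n" "y = gsym p ! v" using lp by (auto simp: in_set_conv_nth)
    then show "y \<in> {..<n}" using gsym_nth lp by auto
  qed
  have "card (set (gsym p)) = n" using distinct_card[OF dist] lp by simp
  then have "set (gsym p) = {..<n}" using card_subset_eq[OF finite_lessThan sub] by simp
  then show ?thesis using dist by (simp add: perms_def)
qed

lemma idx_gsym: assumes pp: "p \<in> perms n" and i: "i < n" shows "idx (gsym p) i = p ! (n - 1 - i)"
proof -
  have lp: "length p = n" using perms_length[OF pp] .
  have d: "distinct (gsym p)" using gsym_perm[OF pp] by (simp add: perms_def)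
  have ni: "n - 1 - i < n" using i by simp
  have v: "p ! (n - 1 - i) < n" using perms_nth_lt[OF pp ni] .
  have "idx p (p ! (n - 1 - i)) = n - 1 - i" using idx_nth pp ni lp by (simp add: perms_def)
  then have e: "gsym p ! (p ! (n - 1 - i)) = i" using gsym_nth[of "p ! (n - 1 - i)" p] v lp i by simp
  have "idx (gsym p) (gsym p ! (p ! (n - 1 - i))) = p ! (n - 1 - i)"
    by (rule idx_nth[OF d]) (use v lp in simp)
  then show ?thesis using e by simp
qed

lemma gsym_bij: "bij_betw gsym (perms n) (perms n)"
proof -
  have inj: "inj_on gsym (perms n)"
  proof (rule inj_onI)
    fix p q assume pp: "p \<in> perms n" and qq: "q \<in> perms n" and e: "gsym p = gsym q"
    have lp: "length p = n" "length q = n" using perms_length pp qq by auto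
    have ix: "idx p v = idx q v" if "v < n" for v
    proof -
      have "gsym p ! v = gsym q ! v" using e by simp
      then have "n - 1 - idx p v = n - 1 - idx q v" using gsym_nth lp that by simp
      moreover have "idx p v < n" "idx q v < n" using perms_idx pp qq that by auto
      ultimately show ?thesis by arith
    qed
    show "p = q"
    proof (rule nth_equalityI)
      show "length p = length q" using lp by simp
      fix i assume i: "i < length p"
      then have pin: "p ! i < n" using perms_nth_lt[OF pp] lp by simp
      have "idx p (p ! i) = i" using idx_nth pp i by (simp add: perms_def)
      then have "idx q (p ! i) = i" using ix[OF pin] by simp
      then have "q ! i = q ! idx q (p ! i)" by simp
      also have "\<dots> = p ! i" using perms_idx(2)[OF qq pin] .
      finally show "p ! i = q ! i" by simp
    qed
  qed
  have "gsym ` perms n = perms n"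
    by (rule endo_inj_surj[OF finite_perms _ inj]) (auto simp: gsym_perm)
  then show ?thesis using inj by (simp add: bij_betw_def)
qed

lemma perm_card_transfer:
  assumes pp: "p \<in> perms n" and PQ: "\<And>i. i < n \<Longrightarrow> P i \<longleftrightarrow> Q (p ! i)"
  shows "card {i. i < n \<and> P i} = card {v. v < n \<and> Q v}"
proof -
  have "bij_betw (\<lambda>i. p ! i) {i. i < n \<and> P i} {v. v < n \<and> Q v}"
  proof (rule bij_betw_imageI)
    show "inj_on (\<lambda>i. p ! i) {i. i < n \<and> P i}" using perms_nth_inj[OF pp] by (auto simp: inj_on_def)
    show "(\<lambda>i. p ! i) ` {i. i < n \<and> P i} = {v. v < n \<and> Q v}"
    proof (intro equalityI subsetI)
      fix v assume "v \<in> (\<lambda>i. p ! i) ` {i. i < n \<and> P i}"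
      then show "v \<in> {v. v < n \<and> Q v}" using PQ perms_nth_lt[OF pp] by auto
    next
      fix v assume v: "v \<in> {v. v < n \<and> Q v}"
      then have "idx p v < n" "p ! idx p v = v" using perms_idx[OF pp] by auto
      then show "v \<in> (\<lambda>i. p ! i) ` {i. i < n \<and> P i}" using PQ v by force
    qed
  qed
  then show ?thesis by (rule bij_betw_same_card)
qed

lemma gsym_stats:
  assumes pp: "p \<in> perms n"
  shows "des (gsym p) = iasc p" "iasc (gsym p) = des p" "rlmax (gsym p) = lrmax p" "lrmax (gsym p) = lrmin p"
proof -
  have lp: "length p = n" using perms_length[OF pp] .
  have gn: "\<And>v. v < n \<Longrightarrow> gsym p ! v = n - 1 - idx p v" using gsym_nth lp by simp
  have il: "\<And>v. v < n \<Longrightarrow> idx p v < n" using perms_idx[OF pp] by simp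
  have ip: "\<And>i. i < n \<Longrightarrow> idx p (p ! i) = i" using idx_nth pp lp by (simp add: perms_def)
  have "{i. Suc i < length (gsym p) \<and> gsym p ! Suc i < gsym p ! i} = {w. Suc w < length p \<and> idx p w < idx p (Suc w)}"
  proof -
    have "gsym p ! Suc i < gsym p ! i \<longleftrightarrow> idx p i < idx p (Suc i)" if "Suc i < n" for i
      using gn[of i] gn[of "Suc i"] il[of i] il[of "Suc i"] that by auto
    then show ?thesis using lp by auto
  qed
  then show "des (gsym p) = iasc p" by (simp add: des_def iasc_def)
  have "iasc (gsym p) = card {w. Suc w < n \<and> p ! (n - 1 - w) < p ! (n - 1 - Suc w)}"
  proof -
    have "{w. Suc w < length (gsym p) \<and> idx (gsym p) w < idx (gsym p) (Suc w)}
        = {w. Suc w < n \<and> p ! (n - 1 - w) < p ! (n - 1 - Suc w)}"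
      using idx_gsym[OF pp] lp by auto
    then show ?thesis by (simp add: iasc_def)
  qed
  also have "\<dots> = card {i. Suc i < n \<and> p ! Suc i < p ! i}"
  proof -
    let ?f = "\<lambda>w. n - Suc (Suc w)"
    have "bij_betw ?f {w. Suc w < n \<and> p ! (n - 1 - w) < p ! (n - 1 - Suc w)} {i. Suc i < n \<and> p ! Suc i < p ! i}"
    proof (rule bij_betw_imageI)
      show "inj_on ?f {w. Suc w < n \<and> p ! (n - 1 - w) < p ! (n - 1 - Suc w)}" by (rule inj_onI) auto
      show "?f ` {w. Suc w < n \<and> p ! (n - 1 - w) < p ! (n - 1 - Suc w)} = {i. Suc i < n \<and> p ! Suc i < p ! i}"
      proof (intro equalityI subsetI)
        fix i assume "i \<in> ?f ` {w. Suc w < n \<and> p ! (n - 1 - w) < p ! (n - 1 - Suc w)}"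
        then obtain w where w: "Suc w < n" "p ! (n - 1 - w) < p ! (n - 1 - Suc w)" "i = n - Suc (Suc w)" by auto
        then have "n - 1 - w = Suc i" "n - 1 - Suc w = i" by auto
        then show "i \<in> {i. Suc i < n \<and> p ! Suc i < p ! i}" using w by auto
      next
        fix i assume i: "i \<in> {i. Suc i < n \<and> p ! Suc i < p ! i}"
        define w where "w = n - Suc (Suc i)"
        have "Suc w < n" "n - 1 - w = Suc i" "n - 1 - Suc w = i" "i = n - Suc (Suc w)" using i w_def by auto
        then show "i \<in> ?f ` {w. Suc w < n \<and> p ! (n - 1 - w) < p ! (n - 1 - Suc w)}" using i by force
      qed
    qed
    then show ?thesis by (rule bij_betw_same_card)
  qed
  finally show "iasc (gsym p) = des p" using lp by (simp add: des_def)
  have "lrmax p = card {v. v < n \<and> (\<forall>w. v < w \<and> w < n \<longrightarrow> idx p v < idx p w)}"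
    unfolding lrmax_def lp
  proof (rule perm_card_transfer[OF pp])
    fix i assume i: "i < n"
    have v: "p ! i < n" using perms_nth_lt[OF pp i] .
    show "(\<forall>j<i. p ! j < p ! i) \<longleftrightarrow> (\<forall>w. p ! i < w \<and> w < n \<longrightarrow> idx p (p ! i) < idx p w)"
    proof
      assume H: "\<forall>j<i. p ! j < p ! i"
      show "\<forall>w. p ! i < w \<and> w < n \<longrightarrow> idx p (p ! i) < idx p w"
      proof (intro allI impI)
        fix w assume w: "p ! i < w \<and> w < n"
        have "\<not> idx p w < i"
        proof
          assume "idx p w < i"
          then have "p ! idx p w < p ! i" using H by simp
          then show False using perms_idx[OF pp] w by simp
        qed
        moreover have "idx p w \<noteq> i" using perms_idx[OF pp] w by auto
        ultimately show "idx p (p ! i) < idx p w" using ip[OF i] by simp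
      qed
    next
      assume H: "\<forall>w. p ! i < w \<and> w < n \<longrightarrow> idx p (p ! i) < idx p w"
      show "\<forall>j<i. p ! j < p ! i"
      proof (intro allI impI)
        fix j assume j: "j < i"
        have jn: "j < n" using j i by simp
        have "p ! j \<noteq> p ! i" using perms_nth_inj[OF pp jn i] j by simp
        moreover have "\<not> p ! i < p ! j"
        proof
          assume "p ! i < p ! j"
          then have "i < idx p (p ! j)" using H ip[OF i] perms_nth_lt[OF pp jn] by auto
          then show False using ip[OF jn] j by simp
        qed
        ultimately show "p ! j < p ! i" by simp
      qed
    qed
  qed
  moreover have "rlmax (gsym p) = card {v. v < n \<and> (\<forall>w. v < w \<and> w < n \<longrightarrow> idx p v < idx p w)}"
  proof -
    have "{i. i < length (gsym p) \<and> (\<forall>j. i < j \<and> j < length (gsym p) \<longrightarrow> gsym p ! j < gsym p ! i)}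
      = {v. v < n \<and> (\<forall>w. v < w \<and> w < n \<longrightarrow> idx p v < idx p w)}"
    proof -
      have "(gsym p ! w < gsym p ! v) \<longleftrightarrow> idx p v < idx p w" if "v < n" "w < n" for v w
        using gn[OF that(1)] gn[OF that(2)] il[OF that(1)] il[OF that(2)] by auto
      then show ?thesis using lp by auto
    qed
    then show ?thesis by (simp add: rlmax_def)
  qed
  ultimately show "rlmax (gsym p) = lrmax p" by simp
  have "lrmin p = card {v. v < n \<and> (\<forall>w<v. idx p v < idx p w)}"
    unfolding lrmin_def lp
  proof (rule perm_card_transfer[OF pp])
    fix i assume i: "i < n"
    show "(\<forall>j<i. p ! i < p ! j) \<longleftrightarrow> (\<forall>w<p ! i. idx p (p ! i) < idx p w)"
    proof
      assume H: "\<forall>j<i. p ! i < p ! j"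
      show "\<forall>w<p ! i. idx p (p ! i) < idx p w"
      proof (intro allI impI)
        fix w assume w: "w < p ! i"
        have wn: "w < n" using w perms_nth_lt[OF pp i] by simp
        have "\<not> idx p w < i"
        proof
          assume "idx p w < i"
          then have "p ! i < p ! idx p w" using H by simp
          then show False using perms_idx[OF pp wn] w by simp
        qed
        moreover have "idx p w \<noteq> i" using perms_idx[OF pp wn] w by auto
        ultimately show "idx p (p ! i) < idx p w" using ip[OF i] by simp
      qed
    next
      assume H: "\<forall>w<p ! i. idx p (p ! i) < idx p w"
      show "\<forall>j<i. p ! i < p ! j"
      proof (intro allI impI)
        fix j assume j: "j < i"
        have jn: "j < n" using j i by simp
        have "p ! j \<noteq> p ! i" using perms_nth_inj[OF pp jn i] j by simp
        moreover have "\<not> p ! j < p ! i"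
        proof
          assume "p ! j < p ! i"
          then have "i < idx p (p ! j)" using H ip[OF i] by auto
          then show False using ip[OF jn] j by simp
        qed
        ultimately show "p ! i < p ! j" by simp
      qed
    qed
  qed
  moreover have "lrmax (gsym p) = card {v. v < n \<and> (\<forall>w<v. idx p v < idx p w)}"
  proof -
    have "{i. i < length (gsym p) \<and> (\<forall>j<i. gsym p ! j < gsym p ! i)}
      = {v. v < n \<and> (\<forall>w<v. idx p v < idx p w)}"
    proof -
      have "(gsym p ! w < gsym p ! v) \<longleftrightarrow> idx p v < idx p w" if "v < n" "w < n" for v w
        using gn[OF that(1)] gn[OF that(2)] il[OF that(1)] il[OF that(2)] by auto
      then show ?thesis using lp by auto
    qed
    then show ?thesis by (simp add: lrmax_def)
  qed
  ultimately show "lrmax (gsym p) = lrmin p" by simp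
qed



lemma card_transfer: "bij_betw b A B \<Longrightarrow> card {x \<in> A. P (b x)} = card {y \<in> B. P y}"
proof -
  assume bij: "bij_betw b A B"
  have "b ` {x \<in> A. P (b x)} = {y \<in> B. P y}" using bij by (auto simp: bij_betw_def)
  moreover have "inj_on b {x \<in> A. P (b x)}" using bij by (auto simp: bij_betw_def inj_on_def)
  ultimately show ?thesis using card_image by fastforce
qed

lemma fiber_bij:
  assumes fA: "finite A" and fB: "finite B"
    and eq: "\<And>y. card {a \<in> A. f a = y} = card {b \<in> B. h b = y}"
  shows "\<exists>\<rho>. bij_betw \<rho> A B \<and> (\<forall>a\<in>A. f a = h (\<rho> a))"
proof -
  have "\<forall>y. \<exists>g. bij_betw g {a \<in> A. f a = y} {b \<in> B. h b = y}"
  proof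
    fix y
    show "\<exists>g. bij_betw g {a \<in> A. f a = y} {b \<in> B. h b = y}"
      by (rule finite_same_card_bij) (use fA fB eq in auto)
  qed
  from choice[OF this] obtain G where G0: "\<forall>y. bij_betw (G y) {a \<in> A. f a = y} {b \<in> B. h b = y}" by blast
  then have G: "\<And>y. bij_betw (G y) {a \<in> A. f a = y} {b \<in> B. h b = y}" by blast
  define \<rho> where "\<rho> a = G (f a) a" for a
  have img: "\<rho> a \<in> B \<and> h (\<rho> a) = f a" if "a \<in> A" for a
  proof -
    have "a \<in> {a' \<in> A. f a' = f a}" using that by simp
    then have "G (f a) a \<in> {b \<in> B. h b = f a}" using G[of "f a"] by (auto simp: bij_betw_def)
    then show ?thesis by (simp add: \<rho>_def)
  qed
  have inj: "inj_on \<rho> A"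
  proof (rule inj_onI)
    fix a a' assume a: "a \<in> A" and a': "a' \<in> A" and e: "\<rho> a = \<rho> a'"
    have i1: "h (\<rho> a) = f a" using img[OF a] by blast
    have i2: "h (\<rho> a') = f a'" using img[OF a'] by blast
    have "f a = h (\<rho> a)" using i1 by simp
    also have "\<dots> = h (\<rho> a')" using e by simp
    also have "\<dots> = f a'" using i2 by simp
    finally have fa: "f a = f a'" .
    have ge: "G (f a) a = G (f a) a'" using e fa unfolding \<rho>_def by simp
    have ij: "inj_on (G (f a)) {x \<in> A. f x = f a}" using G[of "f a"] by (simp add: bij_betw_def)
    have m1: "a \<in> {x \<in> A. f x = f a}" and m2: "a' \<in> {x \<in> A. f x = f a}" using a a' fa by auto
    show "a = a'" using inj_onD[OF ij ge m1 m2] .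
  qed
  have sur: "\<rho> ` A = B"
  proof (intro equalityI subsetI)
    fix b assume "b \<in> \<rho> ` A"
    then show "b \<in> B"
    proof (rule imageE)
      fix a assume "b = \<rho> a" "a \<in> A"
      then show "b \<in> B" using img[of a] by simp
    qed
  next
    fix b assume b: "b \<in> B"
    have im: "G (h b) ` {a \<in> A. f a = h b} = {b' \<in> B. h b' = h b}"
      by (rule bij_betw_imp_surj_on[OF G])
    have "b \<in> {b' \<in> B. h b' = h b}" using b by simp
    then have "b \<in> G (h b) ` {a \<in> A. f a = h b}" by (simp only: im)
    then show "b \<in> \<rho> ` A"
    proof (rule imageE)
      fix a assume a: "b = G (h b) a" "a \<in> {a \<in> A. f a = h b}"
      then have "\<rho> a = b" unfolding \<rho>_def by simp
      then show "b \<in> \<rho> ` A" using a(2) by (intro image_eqI[of b \<rho> a]) auto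
    qed
  qed
  have "bij_betw \<rho> A B" using inj sur by (simp add: bij_betw_def)
  moreover have "\<forall>a\<in>A. f a = h (\<rho> a)" using img by (simp add: eq_commute)
  ultimately show ?thesis by blast
qed

lemma fiber_eq:
  "card {s \<in> inv_seqs n. (asc s, rep s, zero s, maxst s) = (a, r, z, m)}
 = card {t \<in> inv_seqs n. (rep t, asc t, rmin t, zero t) = (a, r, z, m)}"
proof -
  define Q1 where "Q1 = (\<lambda>h (w::nat \<times> nat \<times> nat \<times> nat). fst w = a \<and> h = r \<and> fst (snd w) = z \<and> fst (snd (snd w)) = m)"
  define Q2 where "Q2 = (\<lambda>h (w::nat \<times> nat \<times> nat \<times> nat). h = a \<and> fst w = r \<and> snd (snd (snd w)) = z \<and> fst (snd w) = m)"
  have "card {s \<in> inv_seqs n. (asc s, rep s, zero s, maxst s) = (a, r, z, m)}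
      = card {s \<in> inv_seqs n. Q1 (rep s) (oth s)}"
    by (rule arg_cong[where f = card]) (auto simp: Q1_def oth_def)
  also have "\<dots> = card {s \<in> inv_seqs n. Q1 (iaP s) (oth s)}" by (rule lemmaL)
  also have "\<dots> = card {s \<in> inv_seqs n. (\<lambda>p. des p = a \<and> iasc p = r \<and> lrmax p = z \<and> lrmin p = m) (decode s)}"
    by (rule arg_cong[where f = card])
       (auto simp: Q1_def oth_def stats_decode iaP_decode[THEN conjunct2, symmetric])
  also have "\<dots> = card {p \<in> perms n. des p = a \<and> iasc p = r \<and> lrmax p = z \<and> lrmin p = m}"
    by (rule card_transfer[OF decode_bij])
  also have "\<dots> = card {p \<in> perms n. (\<lambda>q. iasc q = a \<and> des q = r \<and> rlmax q = z \<and> lrmax q = m) (gsym p)}"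
    by (rule arg_cong[where f = card]) (auto simp: gsym_stats)
  also have "\<dots> = card {q \<in> perms n. iasc q = a \<and> des q = r \<and> rlmax q = z \<and> lrmax q = m}"
    by (rule card_transfer[OF gsym_bij])
  also have "\<dots> = card {t \<in> inv_seqs n. (\<lambda>q. iasc q = a \<and> des q = r \<and> rlmax q = z \<and> lrmax q = m) (decode t)}"
    by (rule card_transfer[OF decode_bij, symmetric])
  also have "\<dots> = card {t \<in> inv_seqs n. Q2 (iaP t) (oth t)}"
    by (rule arg_cong[where f = card])
       (auto simp: Q2_def oth_def stats_decode iaP_decode[THEN conjunct2, symmetric])
  also have "\<dots> = card {t \<in> inv_seqs n. Q2 (rep t) (oth t)}" by (rule lemmaL[symmetric])
  also have "\<dots> = card {t \<in> inv_seqs n. (rep t, asc t, rmin t, zero t) = (a, r, z, m)}"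
    by (rule arg_cong[where f = card]) (auto simp: Q2_def oth_def)
  finally show ?thesis .
qed

theorem mainTheorem5:
  fixes n :: nat
  assumes "n \<ge> 1"
  shows "\<exists>\<rho>. bij_betw \<rho> (inv_seqs n) (inv_seqs n) \<and>
    (\<forall>s\<in>inv_seqs n. (asc s, rep s, zero s, maxst s) =
                        (rep (\<rho> s), asc (\<rho> s), rmin (\<rho> s), zero (\<rho> s)))"
proof -
  have "card {s \<in> inv_seqs n. (asc s, rep s, zero s, maxst s) = y}
          = card {t \<in> inv_seqs n. (rep t, asc t, rmin t, zero t) = y}" for y
  proof -
    obtain a r z m where "y = (a, r, z, m)" by (cases y) auto
    then show ?thesis using fiber_eq by simp
  qed
  then have "\<exists>\<rho>. bij_betw \<rho> (inv_seqs n) (inv_seqs n) \<and>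
    (\<forall>a\<in>inv_seqs n. (\<lambda>s. (asc s, rep s, zero s, maxst s)) a = (\<lambda>t. (rep t, asc t, rmin t, zero t)) (\<rho> a))"
    by (rule fiber_bij[OF finite_inv_seqs finite_inv_seqs])
  then show ?thesis by simp
qed


end
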